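(* Let $\hat q$ be an $n\times n$ parametric matrix, let $M$ be an $n\times m$ $(\hat q,1)$-Manin matrix over $\mathfrak R$, let $N$ be an $m\times s$ matrix over $\mathfrak R$ and $H=(h_{il})$ an $n\times s$ matrix over $\mathfrak R$ such that $$[M_{ij},N_{kl}]=-\delta_{jk}h_{il}\qquad(1\le i\le n,\ 1\le j,k\le m,\ 1\le l\le s).$$ Let $r\le m$, let $I=(i_1<\dots<i_r)$ be increasing with entries in $\{1,\dots,n\}$ and $K=(k_1,\dots,k_r)$ a multi-index with entries in $\{1,\dots,s\}$. Let $C$ be the $r\times r$ matrix with entries $C_{ab}=(MN)_{i_ak_b}+(r-b)h_{i_ak_b}$, i.e. $C=(MN)_{IK}+H_{IK}\,\mathrm{diag}(r-1,r-2,\dots,1,0)$, and set $\mathrm{cdet}_{\hat q}(C)=\sum_{\sigma\in S_r}\varepsilon(\hat q,I,\sigma)C_{\sigma(1)1}\cdots C_{\sigma(r)r}$. Then $$\mathrm{cdet}_{\hat q}(C)=\sum_J\mathrm{cdet}_{\hat q}(M_{IJ})\,\mathrm{cdet}(N_{JK}),$$ the sum over all increasing multi-indices $J=(j_1<\dots<j_r)$ with entries in $\{1,\dots,m\}$. In particular, if $m=n=s$, then $\mathrm{cdet}_{\hat q}(MN+H\,\mathrm{diag}(n-1,n-2,\dots,1,0))=\mathrm{cdet}_{\hat q}(M)\,\mathrm{cdet}(N)$.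
   Context: $\mathfrak R$ is an associative unital algebra over $\mathbb C$. A parametric $n\times n$ matrix is a matrix $\hat q=(q_{ij})$ of nonzero complex numbers with $q_{ij}q_{ji}=1$, $q_{ii}=1$. For parametric $\hat q$ ($n\times n$) and $\hat p$ ($m\times m$), an $n\times m$ matrix $M$ over $\mathfrak R$ is a $(\hat q,\hat p)$-Manin matrix if $M_{ik}M_{jk}=q_{ji}M_{jk}M_{ik}$ for $i<j$ and all $k$, and $M_{ik}M_{jl}-q_{ji}p_{kl}M_{jl}M_{ik}+p_{kl}M_{il}M_{jk}-q_{ji}M_{jk}M_{il}=0$ for $i<j$, $k<l$; a $(\hat q,1)$-Manin matrix is one where all $p_{kl}=1$. For increasing $I=(i_1<\dots<i_r)$ and $\sigma\in S_r$, $\varepsilon(\hat q,I,\sigma)=\prod_{s<t,\ \sigma(s)>\sigma(t)}(-q_{i_{\sigma(s)}i_{\sigma(t)}})$. For a matrix $X$, increasing $I$ and any multi-index $J=(j_1,\dots,j_r)$, $\mathrm{cdet}_{\hat q}(X_{IJ})=\sum_{\sigma\in S_r}\varepsilon(\hat q,I,\sigma)X_{i_{\sigma(1)},j_1}\cdots X_{i_{\sigma(r)},j_r}$, and $\mathrm{cdet}$ without subscript is the case where all parameters equal $1$, i.e. $\mathrm{cdet}(X_{IJ})=\sum_{\sigma}\mathrm{sgn}(\sigma)X_{i_{\sigma(1)},j_1}\cdots X_{i_{\sigma(r)},j_r}$; for square $X$, $\mathrm{cdet}_{\hat q}(X)$ is the case $I=J=(1,\dots,n)$. *)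

theory Defs
  imports Complex_Main "HOL-Combinatorics.Permutations"
begin

text \<open>An associative unital algebra over the complex numbers is modelled as a ring
  'a :: ring_1 together with a unital ring homomorphism  c : complex \<Rightarrow> 'a
  whose image is central (the structure map of the algebra; c z * x is scalar multiplication).\<close>
definition calg_emb :: "(complex \<Rightarrow> 'a::ring_1) \<Rightarrow> bool" where
  "calg_emb c \<longleftrightarrow> c 1 = 1 \<and> (\<forall>z w. c (z + w) = c z + c w) \<and> (\<forall>z w. c (z * w) = c z * c w)
     \<and> (\<forall>z x. c z * x = x * c z)"

text \<open>Indices are 0-based: an n x n matrix is a function on {0..<n} x {0..<n}.\<close>
definition parametric_mat :: "nat \<Rightarrow> (nat \<Rightarrow> nat \<Rightarrow> complex) \<Rightarrow> bool" where
  "parametric_mat n q \<longleftrightarrow> (\<forall>i<n. \<forall>j<n. q i j \<noteq> 0 \<and> q i j * q j i = 1) \<and> (\<forall>i<n. q i i = 1)"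

text \<open>(q,1)-Manin matrix (all p_kl = 1), n x m, over the algebra with structure map c.\<close>
definition q1_manin :: "(complex \<Rightarrow> 'a::ring_1) \<Rightarrow> nat \<Rightarrow> nat \<Rightarrow> (nat \<Rightarrow> nat \<Rightarrow> complex)
    \<Rightarrow> (nat \<Rightarrow> nat \<Rightarrow> 'a) \<Rightarrow> bool" where
  "q1_manin c n m q M \<longleftrightarrow>
     (\<forall>i j k. i < j \<and> j < n \<and> k < m \<longrightarrow> M i k * M j k = c (q j i) * M j k * M i k) \<and>
     (\<forall>i j k l. i < j \<and> j < n \<and> k < l \<and> l < m \<longrightarrow>
        M i k * M j l - c (q j i * 1) * M j l * M i k + c 1 * M i l * M j k
          - c (q j i) * M j k * M i l = 0)"

definition qeps :: "(nat \<Rightarrow> nat \<Rightarrow> complex) \<Rightarrow> nat list \<Rightarrow> (nat \<Rightarrow> nat) \<Rightarrow> complex" where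
  "qeps q I \<sigma> = (\<Prod>(s,t) \<in> {(s,t). s < t \<and> t < length I \<and> \<sigma> s > \<sigma> t}.
                    - q (I ! \<sigma> s) (I ! \<sigma> t))"

definition cdetq :: "(complex \<Rightarrow> 'a::ring_1) \<Rightarrow> (nat \<Rightarrow> nat \<Rightarrow> complex) \<Rightarrow> nat list \<Rightarrow> nat list
    \<Rightarrow> (nat \<Rightarrow> nat \<Rightarrow> 'a) \<Rightarrow> 'a" where
  "cdetq c q I J X = (\<Sum>\<sigma> | \<sigma> permutes {0..<length I}.
      c (qeps q I \<sigma>) * prod_list (map (\<lambda>k. X (I ! \<sigma> k) (J ! k)) [0..<length I]))"

definition cdet :: "(complex \<Rightarrow> 'a::ring_1) \<Rightarrow> nat list \<Rightarrow> nat list \<Rightarrow> (nat \<Rightarrow> nat \<Rightarrow> 'a) \<Rightarrow> 'a" where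
  "cdet c I J X = cdetq c (\<lambda>_ _. 1) I J X"

definition matmul :: "nat \<Rightarrow> (nat \<Rightarrow> nat \<Rightarrow> 'a::ring_1) \<Rightarrow> (nat \<Rightarrow> nat \<Rightarrow> 'a) \<Rightarrow> nat \<Rightarrow> nat \<Rightarrow> 'a" where
  "matmul m M N i l = (\<Sum>j<m. M i j * N j l)"

end

theory Submission
  imports Defs
begin


fun prodcol :: "(nat \<Rightarrow> 'a::ring_1) list \<Rightarrow> (nat \<Rightarrow> nat) \<Rightarrow> nat \<Rightarrow> 'a" where
  "prodcol [] g k = 1"
| "prodcol (v # vs) g k = v (g k) * prodcol vs g (Suc k)"

lemma prodcol_append: "prodcol (xs @ ys) g k = prodcol xs g k * prodcol ys g (k + length xs)"
  by (induction xs arbitrary: k) (simp_all add: mult.assoc)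

lemma prodcol_conv: "prodcol vs g k = prod_list (map (\<lambda>i. (vs ! (i - k)) (g i)) [k..<k + length vs])"
proof (induction vs arbitrary: k)
  case Nil then show ?case by simp
next
  case (Cons v vs)
  have meq: "map (\<lambda>i. ((v # vs) ! (i - k)) (g i)) [Suc k..<Suc k + length vs]
      = map (\<lambda>i. (vs ! (i - Suc k)) (g i)) [Suc k..<Suc k + length vs]"
  proof (rule map_cong)
    fix i assume "i \<in> set [Suc k..<Suc k + length vs]"
    then have "i - k = Suc (i - Suc k)" by auto
    then show "((v # vs) ! (i - k)) (g i) = (vs ! (i - Suc k)) (g i)" by simp
  qed simp
  have "prodcol (v # vs) g k = v (g k) * prod_list (map (\<lambda>i. (vs ! (i - Suc k)) (g i)) [Suc k..<Suc k + length vs])"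
    using Cons.IH by simp
  also have "\<dots> = prod_list (map (\<lambda>i. ((v # vs) ! (i - k)) (g i)) (k # [Suc k..<Suc k + length vs]))"
    by (simp only: list.map prod_list.Cons meq diff_self_eq_0 nth_Cons_0)
  also have "k # [Suc k..<Suc k + length vs] = [k..<k + length (v # vs)]"
    by (simp add: upt_rec)
  finally show ?case .
qed

lemma prodcol_conv0: "prodcol vs g 0 = prod_list (map (\<lambda>i. (vs ! i) (g i)) [0..<length vs])"
  by (simp add: prodcol_conv)

lemma prodcol_cong:
  assumes "length vs = length ws" "\<And>i. i < length vs \<Longrightarrow> (vs ! i) (g (k + i)) = (ws ! i) (g (k + i))"
  shows "prodcol vs g k = prodcol ws g k"
  using assms
proof (induction vs arbitrary: ws k)
  case Nil then show ?case by simp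
next
  case (Cons v vs)
  then obtain w ws' where ws: "ws = w # ws'" by (cases ws) auto
  have "v (g k) = w (g k)" using Cons.prems(2)[of 0] ws by simp
  moreover have "prodcol vs g (Suc k) = prodcol ws' g (Suc k)"
    using Cons.prems ws by (intro Cons.IH) (auto, metis Suc_less_eq add_Suc_right nth_Cons_Suc)
  ultimately show ?case using ws by simp
qed

lemma prodcol_cong_g:
  assumes "\<And>i. i < length vs \<Longrightarrow> g (k + i) = g' (k + i)"
  shows "prodcol vs g k = prodcol vs g' k"
  using assms
proof (induction vs arbitrary: k)
  case Nil then show ?case by simp
next
  case (Cons v vs)
  have "g k = g' k" using Cons.prems[of 0] by simp
  moreover have "prodcol vs g (Suc k) = prodcol vs g' (Suc k)"
    using Cons.prems by (intro Cons.IH) (metis Suc_less_eq add_Suc_right length_Cons add_Suc)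
  ultimately show ?case by simp
qed

definition invs :: "nat \<Rightarrow> (nat \<Rightarrow> nat) \<Rightarrow> (nat \<times> nat) set" where
  "invs r \<sigma> = {(s,t). s < t \<and> t < r \<and> \<sigma> t < \<sigma> s}"

lemma finite_invs: "finite (invs r \<sigma>)"
  by (rule finite_subset[of _ "{0..<r} \<times> {0..<r}"]) (auto simp: invs_def)

lemma qeps_invs: "qeps q I \<sigma> = (\<Prod>(s,t)\<in>invs (length I) \<sigma>. - q (I ! \<sigma> s) (I ! \<sigma> t))"
  unfolding qeps_def invs_def by (rule prod.cong) auto

definition DD :: "(complex \<Rightarrow> 'a::ring_1) \<Rightarrow> (nat \<Rightarrow> nat \<Rightarrow> complex) \<Rightarrow> nat list \<Rightarrow> (nat \<Rightarrow> 'a) list \<Rightarrow> 'a" where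
  "DD c q I vs = (\<Sum>\<sigma> | \<sigma> permutes {0..<length I}. c (qeps q I \<sigma>) * prodcol vs (\<lambda>k. I ! \<sigma> k) 0)"

lemma cdetq_DD: "length J = length I \<Longrightarrow> cdetq c q I J X = DD c q I (map (\<lambda>j x. X x j) J)"
proof -
  assume l: "length J = length I"
  have eq: "\<And>\<sigma>. map (\<lambda>k. X (I ! \<sigma> k) (J ! k)) [0..<length I] = map (\<lambda>i. (map (\<lambda>j x. X x j) J ! i) (I ! \<sigma> i)) [0..<length I]"
    by (rule map_cong) (auto simp: l)
  show ?thesis unfolding cdetq_def DD_def prodcol_conv0 by (simp only: eq length_map l)
qed

definition tr :: "nat \<Rightarrow> nat \<Rightarrow> nat" where "tr b = Transposition.transpose b (Suc b)"

lemma tr_tr[simp]: "tr b (tr b x) = x" unfolding tr_def by simp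
lemma tr_b[simp]: "tr b b = Suc b" and tr_Sb[simp]: "tr b (Suc b) = b"
  unfolding tr_def by simp_all
lemma tr_other: "x \<noteq> b \<Longrightarrow> x \<noteq> Suc b \<Longrightarrow> tr b x = x" unfolding tr_def by simp
lemma tr_comp_tr[simp]: "\<sigma> \<circ> tr b \<circ> tr b = \<sigma>" by (rule ext) simp

lemma tr_mono: "x < y \<Longrightarrow> (x, y) \<noteq> (b, Suc b) \<Longrightarrow> tr b x < tr b y"
  unfolding tr_def transpose_def by auto

lemma tr_less: "Suc b < r \<Longrightarrow> y < r \<Longrightarrow> tr b y < r"
  unfolding tr_def transpose_def by auto

lemma invs_swap:
  assumes b: "Suc b < r" and lt: "\<sigma> b < \<sigma> (Suc b)"
  shows "invs r (\<sigma> \<circ> tr b) = insert (b, Suc b) ((\<lambda>(x,y). (tr b x, tr b y)) ` invs r \<sigma>)"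
    and "(b, Suc b) \<notin> (\<lambda>(x,y). (tr b x, tr b y)) ` invs r \<sigma>"
proof -
  show "invs r (\<sigma> \<circ> tr b) = insert (b, Suc b) ((\<lambda>(x,y). (tr b x, tr b y)) ` invs r \<sigma>)"
  proof (intro equalityI subsetI)
    fix p assume p: "p \<in> invs r (\<sigma> \<circ> tr b)"
    obtain x y where xy: "p = (x, y)" by (cases p)
    have h: "x < y" "y < r" "\<sigma> (tr b y) < \<sigma> (tr b x)" using p xy by (auto simp: invs_def)
    show "p \<in> insert (b, Suc b) ((\<lambda>(x,y). (tr b x, tr b y)) ` invs r \<sigma>)"
    proof (cases "(x, y) = (b, Suc b)")
      case True then show ?thesis using xy by simp
    next
      case False
      have "(tr b x, tr b y) \<in> invs r \<sigma>"
        using h tr_mono[OF h(1) False] tr_less[OF b h(2)] by (auto simp: invs_def)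
      then have "(tr b (tr b x), tr b (tr b y)) \<in> (\<lambda>(x,y). (tr b x, tr b y)) ` invs r \<sigma>"
        by force
      then show ?thesis using xy by simp
    qed
  next
    fix p assume p: "p \<in> insert (b, Suc b) ((\<lambda>(x,y). (tr b x, tr b y)) ` invs r \<sigma>)"
    show "p \<in> invs r (\<sigma> \<circ> tr b)"
    proof (cases "p = (b, Suc b)")
      case True then show ?thesis using b lt by (simp add: invs_def)
    next
      case False
      then obtain x y where xy: "(x, y) \<in> invs r \<sigma>" "p = (tr b x, tr b y)" using p by auto
      have h: "x < y" "y < r" "\<sigma> y < \<sigma> x" using xy by (auto simp: invs_def)
      have "(x, y) \<noteq> (b, Suc b)" using h lt by auto
      then show ?thesis using xy h tr_mono[OF h(1)] tr_less[OF b h(2)] by (auto simp: invs_def)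
    qed
  qed
  show "(b, Suc b) \<notin> (\<lambda>(x,y). (tr b x, tr b y)) ` invs r \<sigma>"
  proof
    assume "(b, Suc b) \<in> (\<lambda>(x,y). (tr b x, tr b y)) ` invs r \<sigma>"
    then obtain x y where "(x, y) \<in> invs r \<sigma>" "tr b x = b" "tr b y = Suc b" by auto
    then have "x = Suc b" "y = b" "x < y" by (metis tr_tr tr_b tr_Sb, metis tr_tr tr_b, auto simp: invs_def)
    then show False by simp
  qed
qed

lemma inj_trpair: "inj_on (\<lambda>(x,y). (tr b x, tr b y)) A"
  by (rule inj_onI) (auto, metis tr_tr, metis tr_tr)

lemma qeps_swap:
  assumes b: "Suc b < length I" and lt: "\<sigma> b < \<sigma> (Suc b)"
  shows "qeps q I (\<sigma> \<circ> tr b) = - q (I ! \<sigma> (Suc b)) (I ! \<sigma> b) * qeps q I \<sigma>"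
proof -
  let ?g = "\<lambda>(x,y). (tr b x, tr b y)"
  let ?f = "\<lambda>(s,t). - q (I ! (\<sigma> \<circ> tr b) s) (I ! (\<sigma> \<circ> tr b) t)"
  have "qeps q I (\<sigma> \<circ> tr b) = prod ?f (insert (b, Suc b) (?g ` invs (length I) \<sigma>))"
    unfolding qeps_invs invs_swap[OF b lt] by simp
  also have "\<dots> = ?f (b, Suc b) * prod ?f (?g ` invs (length I) \<sigma>)"
    by (rule prod.insert) (use invs_swap(2)[OF b lt] finite_invs in auto)
  also have "prod ?f (?g ` invs (length I) \<sigma>) = prod (?f \<circ> ?g) (invs (length I) \<sigma>)"
    by (rule prod.reindex[OF inj_trpair])
  also have "\<dots> = qeps q I \<sigma>"
    unfolding qeps_invs by (rule prod.cong) auto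
  finally show ?thesis by (simp add: comp_def)
qed

lemma card_invs_swap:
  assumes b: "Suc b < r" and lt: "\<sigma> b < \<sigma> (Suc b)"
  shows "card (invs r (\<sigma> \<circ> tr b)) = Suc (card (invs r \<sigma>))"
  unfolding invs_swap[OF b lt]
  by (subst card_insert_disjoint) (use invs_swap(2)[OF b lt] finite_invs in \<open>auto simp: card_image[OF inj_trpair]\<close>)

lemma tr_permutes: "Suc b < r \<Longrightarrow> tr b permutes {0..<r}"
  unfolding tr_def by (rule permutes_swap_id) auto

lemma perm_split:
  assumes b: "Suc b < r"
  shows "(\<Sum>\<sigma> | \<sigma> permutes {0..<r}. f \<sigma>)
       = (\<Sum>\<sigma> | \<sigma> permutes {0..<r} \<and> \<sigma> b < \<sigma> (Suc b). f \<sigma> + f (\<sigma> \<circ> tr b))"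
proof -
  let ?P = "{\<sigma>. \<sigma> permutes {0..<r}}"
  let ?A = "{\<sigma>. \<sigma> permutes {0..<r} \<and> \<sigma> b < \<sigma> (Suc b)}"
  let ?B = "{\<sigma>. \<sigma> permutes {0..<r} \<and> \<not> \<sigma> b < \<sigma> (Suc b)}"
  have fin: "finite ?P" by (rule finite_permutations) simp
  have PAB: "?P = ?A \<union> ?B" by auto
  have B: "?B = (\<lambda>\<sigma>. \<sigma> \<circ> tr b) ` ?A"
  proof (intro equalityI subsetI)
    fix \<sigma> assume "\<sigma> \<in> ?B"
    then have p: "\<sigma> permutes {0..<r}" and nl: "\<not> \<sigma> b < \<sigma> (Suc b)" by auto
    have "\<sigma> b \<noteq> \<sigma> (Suc b)" using permutes_inj[OF p] by (auto dest: injD)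
    then have "\<sigma> (Suc b) < \<sigma> b" using nl by auto
    then have "\<sigma> \<circ> tr b \<in> ?A" using permutes_compose[OF tr_permutes[OF b] p] by simp
    moreover have "\<sigma> = (\<sigma> \<circ> tr b) \<circ> tr b" by simp
    ultimately show "\<sigma> \<in> (\<lambda>\<sigma>. \<sigma> \<circ> tr b) ` ?A" by blast
  next
    fix \<sigma> assume "\<sigma> \<in> (\<lambda>\<sigma>. \<sigma> \<circ> tr b) ` ?A"
    then obtain \<tau> where "\<tau> \<in> ?A" "\<sigma> = \<tau> \<circ> tr b" by auto
    then show "\<sigma> \<in> ?B" using permutes_compose[OF tr_permutes[OF b]] by auto
  qed
  have inj: "inj_on (\<lambda>\<sigma>. \<sigma> \<circ> tr b) ?A"
    by (rule inj_onI) (metis tr_comp_tr)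
  have "sum f ?P = sum f ?A + sum f ?B"
    by (subst PAB, rule sum.union_disjoint) (use fin in auto)
  also have "sum f ?B = sum (f \<circ> (\<lambda>\<sigma>. \<sigma> \<circ> tr b)) ?A"
    unfolding B by (rule sum.reindex[OF inj])
  finally show ?thesis by (simp add: sum.distrib)
qed

definition good :: "(complex \<Rightarrow> 'a::ring_1) \<Rightarrow> (nat \<Rightarrow> nat \<Rightarrow> complex) \<Rightarrow> nat \<Rightarrow> (nat \<Rightarrow> 'a) \<Rightarrow> (nat \<Rightarrow> 'a) \<Rightarrow> bool" where
  "good c q n x y \<longleftrightarrow> (\<forall>u w. u < w \<longrightarrow> w < n \<longrightarrow>
      x u * y w - c (q w u) * (x w * y u) + y u * x w - c (q w u) * (y w * x u) = 0)"

lemma good_sym: "good c q n x y \<Longrightarrow> good c q n y x"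
  unfolding good_def by (auto simp: algebra_simps)

lemma mono_chain:
  fixes \<tau> :: "nat \<Rightarrow> nat"
  assumes "\<And>b. Suc b < r \<Longrightarrow> \<tau> b < \<tau> (Suc b)"
  shows "s < t \<Longrightarrow> t < r \<Longrightarrow> \<tau> s < \<tau> t"
proof (induction t)
  case 0 then show ?case by simp
next
  case (Suc t)
  have "\<tau> t < \<tau> (Suc t)" using assms Suc.prems by simp
  show ?case
  proof (cases "s = t")
    case True then show ?thesis using \<open>\<tau> t < \<tau> (Suc t)\<close> by simp
  next
    case False
    then have "\<tau> s < \<tau> t" using Suc by simp
    then show ?thesis using \<open>\<tau> t < \<tau> (Suc t)\<close> by simp
  qed
qed

lemma mono_perm_id:
  fixes \<tau> :: "nat \<Rightarrow> nat"
  assumes p: "\<tau> permutes {0..<r}" and m: "\<And>s t. s < t \<Longrightarrow> t < r \<Longrightarrow> \<tau> s < \<tau> t"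
  shows "\<tau> = id"
proof (rule ext)
  fix k show "\<tau> k = id k"
  proof (cases "k < r")
    case False then show ?thesis using permutes_not_in[OF p] by simp
  next
    case True
    have ge: "j < r \<Longrightarrow> j \<le> \<tau> j" for j
    proof (induction j)
      case 0 then show ?case by simp
    next
      case (Suc j) then show ?case using m[of j "Suc j"] by simp
    qed
    have le: "k \<le> j \<Longrightarrow> j < r \<Longrightarrow> \<tau> k + (j - k) \<le> \<tau> j" for j
    proof (induction j)
      case 0 then show ?case by simp
    next
      case (Suc j)
      show ?case
      proof (cases "k = Suc j")
        case True then show ?thesis by simp
      next
        case False
        then have "k \<le> j" using Suc.prems by simp
        then show ?thesis using Suc m[of j "Suc j"] by simp
      qed
    qed
    have "\<tau> (r - 1) < r" using permutes_in_image[OF p] True by simp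
    moreover have "\<tau> k + (r - 1 - k) \<le> \<tau> (r - 1)" using le[of "r - 1"] True by simp
    ultimately have "\<tau> k \<le> k" using True by simp
    then show ?thesis using ge[OF True] by simp
  qed
qed

lemma swap_list:
  assumes "Suc b < length L"
  shows "L = take b L @ [L ! b, L ! Suc b] @ drop (Suc (Suc b)) L"
    and "map (\<lambda>k. L ! tr b k) [0..<length L] = take b L @ [L ! Suc b, L ! b] @ drop (Suc (Suc b)) L"
proof -
  show "L = take b L @ [L ! b, L ! Suc b] @ drop (Suc (Suc b)) L"
    using assms by (simp add: Cons_nth_drop_Suc)
  show "map (\<lambda>k. L ! tr b k) [0..<length L] = take b L @ [L ! Suc b, L ! b] @ drop (Suc (Suc b)) L"
    using assms
    apply (intro nth_equalityI)
     apply (auto simp: nth_append tr_other min_def nth_Cons split: nat.splits)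
     apply (subgoal_tac "i = Suc b", simp, arith)
    apply (subgoal_tac "i = Suc (Suc (b + x2a))", simp, arith)
    done
qed

locale calg =
  fixes c :: "complex \<Rightarrow> 'a::ring_1"
  assumes alg: "calg_emb c"
begin

lemma c1: "c 1 = 1" using alg unfolding calg_emb_def by blast
lemma cadd: "c (z + w) = c z + c w" using alg unfolding calg_emb_def by blast
lemma cmult: "c (z * w) = c z * c w" using alg unfolding calg_emb_def by blast
lemma central: "c z * x = x * c z" using alg unfolding calg_emb_def by blast

lemma c0: "c 0 = 0"
proof -
  have "c 0 = c 0 + c 0" using cadd[of 0 0] by simp
  then show ?thesis by simp
qed

lemma cneg: "c (- z) = - c z"
proof -
  have "c z + c (- z) = 0" using cadd[of z "-z"] c0 by simp
  then show ?thesis by (simp add: eq_neg_iff_add_eq_0 add.commute)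
qed

lemma prodcol_sum: "prodcol (pre @ [\<lambda>x. \<Sum>j\<in>A. f j x] @ post) g k = (\<Sum>j\<in>A. prodcol (pre @ [f j] @ post) g k)"
  by (simp add: prodcol_append sum_distrib_left sum_distrib_right)

lemma DD_sum: "DD c q I (pre @ [\<lambda>x. \<Sum>j\<in>A. f j x] @ post) = (\<Sum>j\<in>A. DD c q I (pre @ [f j] @ post))"
  unfolding DD_def prodcol_sum sum_distrib_left by (rule sum.swap)

lemma DD_add: "DD c q I (pre @ [\<lambda>x. u x + w x] @ post) = DD c q I (pre @ [u] @ post) + DD c q I (pre @ [w] @ post)"
  unfolding DD_def by (simp add: prodcol_append distrib_left distrib_right sum.distrib)

lemma DD_scal:
  assumes "\<And>y. a * y = y * a"
  shows "DD c q I (pre @ [\<lambda>x. a * u x] @ post) = a * DD c q I (pre @ [u] @ post)"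
proof -
  have "\<And>\<sigma>. c (qeps q I \<sigma>) * prodcol (pre @ [\<lambda>x. a * u x] @ post) (\<lambda>k. I ! \<sigma> k) 0
     = a * (c (qeps q I \<sigma>) * prodcol (pre @ [u] @ post) (\<lambda>k. I ! \<sigma> k) 0)"
  proof -
    fix \<sigma> :: "nat \<Rightarrow> nat"
    let ?g = "\<lambda>k. I ! \<sigma> k"
    have "prodcol (pre @ [\<lambda>x. a * u x] @ post) ?g 0 = prodcol pre ?g 0 * (a * (u (?g (length pre)) * prodcol post ?g (Suc (length pre))))"
      by (simp add: prodcol_append mult.assoc)
    also have "\<dots> = a * (prodcol pre ?g 0 * (u (?g (length pre)) * prodcol post ?g (Suc (length pre))))"
      by (metis assms mult.assoc)
    also have "prodcol pre ?g 0 * (u (?g (length pre)) * prodcol post ?g (Suc (length pre))) = prodcol (pre @ [u] @ post) ?g 0"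
      by (simp add: prodcol_append)
    finally show "c (qeps q I \<sigma>) * prodcol (pre @ [\<lambda>x. a * u x] @ post) ?g 0
     = a * (c (qeps q I \<sigma>) * prodcol (pre @ [u] @ post) ?g 0)"
      by (metis assms mult.assoc)
  qed
  then show ?thesis unfolding DD_def by (simp add: sum_distrib_left)
qed

lemma DD_right: "DD c q I (vs @ [\<lambda>x. u x * z]) = DD c q I (vs @ [u]) * z"
  unfolding DD_def by (simp add: prodcol_append sum_distrib_right mult.assoc)

lemma DD_rebr: "DD c q I (pre @ [\<lambda>x. u x * z, w] @ post) = DD c q I (pre @ [u, \<lambda>y. z * w y] @ post)"
  unfolding DD_def by (simp add: prodcol_append mult.assoc)

lemma DD_cong:
  assumes "length ws = length vs" "length vs = length I"
    "\<And>i x. i < length vs \<Longrightarrow> x \<in> set I \<Longrightarrow> (vs ! i) x = (ws ! i) x"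
  shows "DD c q I vs = DD c q I ws"
  unfolding DD_def
proof (rule sum.cong[OF refl])
  fix \<sigma> assume "\<sigma> \<in> {\<sigma>. \<sigma> permutes {0..<length I}}"
  then have p: "\<sigma> permutes {0..<length I}" by simp
  have "prodcol vs (\<lambda>k. I ! \<sigma> k) 0 = prodcol ws (\<lambda>k. I ! \<sigma> k) 0"
  proof (rule prodcol_cong)
    fix i assume i: "i < length vs"
    then have "\<sigma> i < length I" using permutes_in_image[OF p] assms(2) by auto
    then show "(vs ! i) (I ! \<sigma> (0 + i)) = (ws ! i) (I ! \<sigma> (0 + i))"
      using assms(3) i by simp
  qed (use assms in auto)
  then show "c (qeps q I \<sigma>) * prodcol vs (\<lambda>k. I ! \<sigma> k) 0 = c (qeps q I \<sigma>) * prodcol ws (\<lambda>k. I ! \<sigma> k) 0"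
    by simp
qed


lemma ASW:
  assumes len: "length (pre @ [x, y] @ post) = length I" and sorted: "sorted_wrt (<) I"
    and sub: "set I \<subseteq> {..<n}" and gd: "good c q n x y"
  shows "DD c q I (pre @ [x, y] @ post) = - DD c q I (pre @ [y, x] @ post)"
proof -
  define b where "b = length pre"
  define r where "r = length I"
  have b: "Suc b < r" using len by (simp add: b_def r_def)
  define T where "T vs \<sigma> = c (qeps q I \<sigma>) * prodcol vs (\<lambda>k. I ! \<sigma> k) 0" for vs \<sigma>
  let ?A = "{\<sigma>. \<sigma> permutes {0..<r} \<and> \<sigma> b < \<sigma> (Suc b)}"
  have D: "DD c q I vs = (\<Sum>\<sigma>\<in>?A. T vs \<sigma> + T vs (\<sigma> \<circ> tr b))" for vs
  proof -
    have "DD c q I vs = (\<Sum>\<sigma> | \<sigma> permutes {0..<r}. T vs \<sigma>)"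
      unfolding DD_def T_def r_def by simp
    also have "\<dots> = (\<Sum>\<sigma>\<in>?A. T vs \<sigma> + T vs (\<sigma> \<circ> tr b))"
      by (rule perm_split[OF b])
    finally show ?thesis .
  qed
  have z: "T (pre @ [x, y] @ post) \<sigma> + T (pre @ [x, y] @ post) (\<sigma> \<circ> tr b)
        + (T (pre @ [y, x] @ post) \<sigma> + T (pre @ [y, x] @ post) (\<sigma> \<circ> tr b)) = 0"
    if \<sigma>: "\<sigma> \<in> ?A" for \<sigma>
  proof -
    have p: "\<sigma> permutes {0..<r}" and lt: "\<sigma> b < \<sigma> (Suc b)" using \<sigma> by auto
    have slt: "\<sigma> (Suc b) < r" using permutes_in_image[OF p] b by auto
    define g where "g = (\<lambda>k. I ! \<sigma> k)"
    define g' where "g' = (\<lambda>k. I ! (\<sigma> \<circ> tr b) k)"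
    define u where "u = I ! \<sigma> b"
    define w where "w = I ! \<sigma> (Suc b)"
    have uw: "u < w" unfolding u_def w_def
      using sorted_wrt_nth_less[OF sorted lt] slt r_def by simp
    have wn: "w < n" using sub slt unfolding w_def r_def by (metis lessThan_iff nth_mem subsetD)
    have E: "x u * y w - c (q w u) * (x w * y u) + y u * x w - c (q w u) * (y w * x u) = 0"
      using gd uw wn unfolding good_def by blast
    define Pre where "Pre = prodcol pre g 0"
    define Post where "Post = prodcol post g (Suc (Suc b))"
    have Pre': "prodcol pre g' 0 = Pre" unfolding Pre_def g_def g'_def
      by (rule prodcol_cong_g) (simp add: tr_other b_def)
    have Post': "prodcol post g' (Suc (Suc b)) = Post" unfolding Post_def g_def g'_def
      by (rule prodcol_cong_g) (simp add: tr_other)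
    have g'b: "g' b = w" "g' (Suc b) = u" unfolding g'_def u_def w_def by simp_all
    have gb: "g b = u" "g (Suc b) = w" unfolding g_def u_def w_def by simp_all
    define e where "e = qeps q I \<sigma>"
    have e': "qeps q I (\<sigma> \<circ> tr b) = - q w u * e"
      unfolding e_def w_def u_def using qeps_swap[of b I \<sigma> q] b lt r_def by simp
    define cq where "cq = c (q w u)"
    define ce where "ce = c e"
    have ce': "c (qeps q I (\<sigma> \<circ> tr b)) = - (cq * ce)"
      unfolding e' cq_def ce_def by (simp add: cmult cneg)
    have h1: "cq * (ce * X) = ce * (cq * X)" for X
      unfolding cq_def ce_def by (metis central mult.assoc)
    have h2: "cq * (Pre * X) = Pre * (cq * X)" for X
      unfolding cq_def by (metis central mult.assoc)
    have T1: "T (pre @ [x, y] @ post) \<sigma> = ce * (Pre * (x u * (y w * Post)))"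
      unfolding T_def ce_def e_def Pre_def Post_def g_def[symmetric]
      by (simp add: prodcol_append gb[unfolded b_def] b_def)
    have T2: "T (pre @ [x, y] @ post) (\<sigma> \<circ> tr b) = - (cq * ce) * (Pre * (x w * (y u * Post)))"
      unfolding T_def ce' g'_def[symmetric]
      by (simp add: prodcol_append g'b[unfolded b_def] Pre'[unfolded b_def] Post'[unfolded b_def] b_def)
    have T3: "T (pre @ [y, x] @ post) \<sigma> = ce * (Pre * (y u * (x w * Post)))"
      unfolding T_def ce_def e_def Pre_def Post_def g_def[symmetric]
      by (simp add: prodcol_append gb[unfolded b_def] b_def)
    have T4: "T (pre @ [y, x] @ post) (\<sigma> \<circ> tr b) = - (cq * ce) * (Pre * (y w * (x u * Post)))"
      unfolding T_def ce' g'_def[symmetric]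
      by (simp add: prodcol_append g'b[unfolded b_def] Pre'[unfolded b_def] Post'[unfolded b_def] b_def)
    have "ce * (Pre * ((x u * y w - cq * (x w * y u) + y u * x w - cq * (y w * x u)) * Post)) = 0"
      using E unfolding cq_def by simp
    then show ?thesis unfolding T1 T2 T3 T4
      by (simp add: algebra_simps h1 h2)
  qed
  have "DD c q I (pre @ [x, y] @ post) + DD c q I (pre @ [y, x] @ post) = 0"
    unfolding D sum.distrib[symmetric] using z by simp
  then show ?thesis by (simp add: eq_neg_iff_add_eq_0)
qed


lemma GSW:
  assumes "length (pre @ [x] @ mid @ [y] @ post) = length I" and sorted: "sorted_wrt (<) I"
    and sub: "set I \<subseteq> {..<n}" and gxy: "good c q n x y"
    and gm: "\<forall>z\<in>set mid. good c q n x z \<and> good c q n z y"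
  shows "DD c q I (pre @ [x] @ mid @ [y] @ post) = - DD c q I (pre @ [y] @ mid @ [x] @ post)"
  using assms(1) gm
proof (induction mid arbitrary: pre)
  case Nil then show ?case using ASW[OF _ sorted sub gxy, of pre post] by simp
next
  case (Cons z mid)
  have gz: "good c q n x z" "good c q n z y" using Cons.prems by auto
  have "DD c q I (pre @ [x] @ (z # mid) @ [y] @ post) = DD c q I (pre @ [x, z] @ (mid @ [y] @ post))" by simp
  also have "\<dots> = - DD c q I (pre @ [z, x] @ (mid @ [y] @ post))"
    by (rule ASW) (use Cons.prems sorted sub gz in auto)
  also have "DD c q I (pre @ [z, x] @ (mid @ [y] @ post)) = DD c q I ((pre @ [z]) @ [x] @ mid @ [y] @ post)" by simp
  also have "\<dots> = - DD c q I ((pre @ [z]) @ [y] @ mid @ [x] @ post)"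
    by (rule Cons.IH) (use Cons.prems in auto)
  also have "DD c q I ((pre @ [z]) @ [y] @ mid @ [x] @ post) = DD c q I (pre @ [z, y] @ (mid @ [x] @ post))" by simp
  also have "\<dots> = - DD c q I (pre @ [y, z] @ (mid @ [x] @ post))"
    by (rule ASW) (use Cons.prems sorted sub gz in auto)
  finally show ?case by simp
qed

lemma half: "c (1/2) * (X + X) = X"
proof -
  have "c (1/2) * (X + X) = (c (1/2) + c (1/2)) * X" by (simp add: algebra_simps)
  also have "c (1/2) + c (1/2) = c 1" by (simp add: cadd[symmetric])
  finally show ?thesis by (simp add: c1)
qed

lemma DUP:
  assumes "length (pre @ [x] @ mid @ [x] @ post) = length I" and sorted: "sorted_wrt (<) I"
    and sub: "set I \<subseteq> {..<n}" and gxx: "good c q n x x"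
    and gm: "\<forall>z\<in>set mid. good c q n x z \<and> good c q n z x"
  shows "DD c q I (pre @ [x] @ mid @ [x] @ post) = 0"
proof -
  let ?D = "DD c q I (pre @ [x] @ mid @ [x] @ post)"
  have "?D = - ?D" by (rule GSW[OF assms])
  then have "?D + ?D = 0" by (simp add: eq_neg_iff_add_eq_0)
  then show ?thesis using half[of ?D] by simp
qed

lemma DD_perm:
  assumes len: "length vs = length I" and sorted: "sorted_wrt (<) I"
    and sub: "set I \<subseteq> {..<n}" and gd: "\<forall>x\<in>set vs. \<forall>y\<in>set vs. good c q n x y"
    and p: "\<tau> permutes {0..<length I}"
  shows "DD c q I (map (\<lambda>k. vs ! \<tau> k) [0..<length I]) = c (qeps (\<lambda>_ _. 1) I \<tau>) * DD c q I vs"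
  using p
proof (induction "card (invs (length I) \<tau>)" arbitrary: \<tau> rule: less_induct)
  case less
  let ?r = "length I"
  show ?case
  proof (cases "\<exists>b. Suc b < ?r \<and> \<tau> (Suc b) < \<tau> b")
    case False
    have "\<tau> b < \<tau> (Suc b)" if "Suc b < ?r" for b
    proof -
      have "\<tau> b \<noteq> \<tau> (Suc b)" using permutes_inj[OF less.prems] by (auto dest: injD)
      then show ?thesis using False that by auto
    qed
    then have "\<tau> = id" using mono_perm_id[OF less.prems] mono_chain by blast
    moreover have "invs ?r id = {}" by (auto simp: invs_def)
    moreover have "map ((!) vs) [0..<length I] = vs" using len by (metis map_nth)
    ultimately show ?thesis using len by (simp add: qeps_invs c1)
  next
    case True
    then obtain b where b: "Suc b < ?r" and d: "\<tau> (Suc b) < \<tau> b" by blast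
    define \<sigma> where "\<sigma> = \<tau> \<circ> tr b"
    have ps: "\<sigma> permutes {0..<?r}" unfolding \<sigma>_def
      by (rule permutes_compose[OF tr_permutes[OF b] less.prems])
    have lt: "\<sigma> b < \<sigma> (Suc b)" using d by (simp add: \<sigma>_def)
    have ts: "\<tau> = \<sigma> \<circ> tr b" by (simp add: \<sigma>_def)
    have card: "card (invs ?r \<tau>) = Suc (card (invs ?r \<sigma>))"
      unfolding ts by (rule card_invs_swap[OF b lt])
    have IH: "DD c q I (map (\<lambda>k. vs ! \<sigma> k) [0..<?r]) = c (qeps (\<lambda>_ _. 1) I \<sigma>) * DD c q I vs"
      using less.hyps[of \<sigma>] card ps by simp
    have qe: "qeps (\<lambda>_ _. 1) I \<tau> = - 1 * qeps (\<lambda>_ _. 1) I \<sigma>"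
      unfolding ts using qeps_swap[OF b lt, of "\<lambda>_ _. 1"] by simp
    define L where "L = map (\<lambda>k. vs ! \<sigma> k) [0..<?r]"
    have lL: "length L = ?r" by (simp add: L_def)
    have inL: "L ! k \<in> set vs" if "k < ?r" for k
      using permutes_in_image[OF ps] that len by (simp add: L_def)
    have mt: "map (\<lambda>k. vs ! \<tau> k) [0..<?r] = map (\<lambda>k. L ! tr b k) [0..<length L]"
      unfolding lL by (rule map_cong) (auto simp: L_def ts tr_less[OF b])
    have "DD c q I (map (\<lambda>k. vs ! \<tau> k) [0..<?r]) = DD c q I (take b L @ [L ! Suc b, L ! b] @ drop (Suc (Suc b)) L)"
      unfolding mt swap_list(2)[OF b[folded lL]] ..
    also have "\<dots> = - DD c q I (take b L @ [L ! b, L ! Suc b] @ drop (Suc (Suc b)) L)"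
    proof -
      have "DD c q I (take b L @ [L ! b, L ! Suc b] @ drop (Suc (Suc b)) L)
          = - DD c q I (take b L @ [L ! Suc b, L ! b] @ drop (Suc (Suc b)) L)"
        by (rule ASW) (use b lL sorted sub gd inL in auto)
      then show ?thesis by simp
    qed
    also have "take b L @ [L ! b, L ! Suc b] @ drop (Suc (Suc b)) L = L"
      using swap_list(1)[OF b[folded lL]] by simp
    finally show ?thesis unfolding qe IH[folded L_def] by (simp add: cmult cneg c1)
  qed
qed

lemma DD_cong1:
  assumes "length (pre @ [f] @ post) = length I" "\<And>x. x \<in> set I \<Longrightarrow> f x = f' x"
  shows "DD c q I (pre @ [f] @ post) = DD c q I (pre @ [f'] @ post)"
  by (rule DD_cong) (use assms in \<open>auto simp: nth_append nth_Cons split: nat.splits\<close>)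

lemma DD_CT:
  assumes "length (pre @ [u] @ ws) = length I"
    and "\<And>t x. t < length ws \<Longrightarrow> x \<in> set I \<Longrightarrow> z * (ws ! t) x = (ws ! t) x * z + d t x"
  shows "DD c q I (pre @ [\<lambda>x. u x * z] @ ws) = DD c q I (pre @ [u] @ ws) * z
           + (\<Sum>t<length ws. DD c q I (pre @ [u] @ ws[t := d t]))"
  using assms
proof (induction ws arbitrary: pre u d)
  case Nil then show ?case using DD_right[of q I pre u z] by simp
next
  case (Cons w ws)
  have "DD c q I (pre @ [\<lambda>x. u x * z] @ (w # ws)) = DD c q I (pre @ [\<lambda>x. u x * z, w] @ ws)" by simp
  also have "\<dots> = DD c q I (pre @ [u, \<lambda>y. z * w y] @ ws)" by (rule DD_rebr)
  also have "\<dots> = DD c q I ((pre @ [u]) @ [\<lambda>y. w y * z + d 0 y] @ ws)"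
  proof -
    have h0: "\<And>x. x \<in> set I \<Longrightarrow> z * w x = w x * z + d 0 x" using Cons.prems(2)[of 0] by simp
    show ?thesis using DD_cong1[of "pre @ [u]" "\<lambda>y. z * w y" ws I "\<lambda>y. w y * z + d 0 y" q] Cons.prems(1) h0 by simp
  qed
  also have "\<dots> = DD c q I ((pre @ [u]) @ [\<lambda>y. w y * z] @ ws) + DD c q I ((pre @ [u]) @ [d 0] @ ws)"
    by (rule DD_add)
  also have "DD c q I ((pre @ [u]) @ [\<lambda>y. w y * z] @ ws) = DD c q I ((pre @ [u]) @ [w] @ ws) * z
           + (\<Sum>t<length ws. DD c q I ((pre @ [u]) @ [w] @ ws[t := d (Suc t)]))"
  proof (rule Cons.IH)
    show "length ((pre @ [u]) @ [w] @ ws) = length I" using Cons.prems(1) by simp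
    fix t x assume "t < length ws" "x \<in> set I"
    then show "z * (ws ! t) x = (ws ! t) x * z + d (Suc t) x" using Cons.prems(2)[of "Suc t" x] by simp
  qed
  finally have X: "DD c q I (pre @ [\<lambda>x. u x * z] @ w # ws) = DD c q I ((pre @ [u]) @ [w] @ ws) * z
           + (\<Sum>t<length ws. DD c q I ((pre @ [u]) @ [w] @ ws[t := d (Suc t)])) + DD c q I ((pre @ [u]) @ [d 0] @ ws)" .
  have Y: "(\<Sum>t<length (w # ws). DD c q I (pre @ [u] @ (w # ws)[t := d t]))
      = DD c q I (pre @ [u] @ (d 0 # ws)) + (\<Sum>t<length ws. DD c q I (pre @ [u] @ (w # ws[t := d (Suc t)])))"
    by (simp only: length_Cons sum.lessThan_Suc_shift) simp
  show ?case unfolding Y using X by (simp add: algebra_simps)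
qed

end


locale capelli = calg c for c :: "complex \<Rightarrow> 'a::ring_1" +
  fixes q :: "nat \<Rightarrow> nat \<Rightarrow> complex" and n m s :: nat and M N H :: "nat \<Rightarrow> nat \<Rightarrow> 'a"
  assumes manin: "q1_manin c n m q M"
    and comm: "\<And>i j k l. i < n \<Longrightarrow> j < m \<Longrightarrow> k < m \<Longrightarrow> l < s \<Longrightarrow>
                 M i j * N k l - N k l * M i j = - (if j = k then H i l else 0)"
begin

lemma good_MM_less:
  assumes "j < j'" "j' < m"
  shows "good c q n (\<lambda>x. M x j) (\<lambda>x. M x j')"
  unfolding good_def
proof (intro allI impI)
  fix u w assume uw: "u < w" "w < n"
  have eq: "M u j * M w j' - c (q w u * 1) * M w j' * M u j + c 1 * M u j' * M w j
          - c (q w u) * M w j * M u j' = 0"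
    using manin uw assms unfolding q1_manin_def by blast
  have Teq: "M u j * M w j' - c (q w u) * (M w j * M u j') + M u j' * M w j - c (q w u) * (M w j' * M u j)
      = M u j * M w j' - c (q w u * 1) * M w j' * M u j + c 1 * M u j' * M w j
          - c (q w u) * M w j * M u j'"
    by (simp add: c1 algebra_simps)
  then show "M u j * M w j' - c (q w u) * (M w j * M u j') + M u j' * M w j - c (q w u) * (M w j' * M u j) = 0"
    by (subst Teq) (rule eq)
qed

lemma good_MM:
  assumes "j < m" "j' < m"
  shows "good c q n (\<lambda>x. M x j) (\<lambda>x. M x j')"
proof (cases j j' rule: linorder_cases)
  case less then show ?thesis using good_MM_less assms by blast
next
  case greater then show ?thesis using good_MM_less assms good_sym by blast
next
  case equal
  show ?thesis unfolding good_def equal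
  proof (intro allI impI)
    fix u w assume uw: "u < w" "w < n"
    have eq: "M u j' * M w j' = c (q w u) * M w j' * M u j'"
      using manin uw assms unfolding q1_manin_def by blast
    then show "M u j' * M w j' - c (q w u) * (M w j' * M u j') + M u j' * M w j' - c (q w u) * (M w j' * M u j') = 0"
      by (simp add: mult.assoc)
  qed
qed

lemma good_Mh:
  assumes j: "j < m" and l: "l < s"
  shows "good c q n (\<lambda>x. M x j) (\<lambda>x. H x l)"
  unfolding good_def
proof (intro allI impI)
  fix u w assume uw: "u < w" "w < n"
  define A where "A = M u j"
  define B where "B = M w j"
  define Nn where "Nn = N j l"
  define Q where "Q = c (q w u)"
  have hu: "H u l = Nn * A - A * Nn" using comm[of u j j l] uw j l unfolding A_def Nn_def
    by (simp add: algebra_simps)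
  have hw: "H w l = Nn * B - B * Nn" using comm[of w j j l] uw j l unfolding B_def Nn_def
    by (simp add: algebra_simps)
  have AB: "A * B = Q * (B * A)"
    using manin uw j unfolding q1_manin_def A_def B_def Q_def by (simp add: mult.assoc)
  have AB': "A * (B * X) = Q * (B * (A * X))" for X
    using AB by (metis mult.assoc)
  have cN: "Nn * (Q * X) = Q * (Nn * X)" for X
    unfolding Q_def by (metis central mult.assoc)
  have "A * H w l - Q * (B * H u l) + H u l * B - Q * (H w l * A) = 0"
    unfolding hu hw by (simp add: algebra_simps AB' AB cN)
  then show "M u j * H w l - c (q w u) * (M w j * H u l) + H u l * M w j - c (q w u) * (H w l * M u j) = 0"
    unfolding A_def B_def Q_def .
qed

lemma good_hM: "j < m \<Longrightarrow> l < s \<Longrightarrow> good c q n (\<lambda>x. H x l) (\<lambda>x. M x j)"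
  using good_Mh good_sym by blast

end





lemma (in calg) DD_zero: "DD c q I (pre @ [\<lambda>x. 0] @ post) = 0"
  unfolding DD_def by (simp add: prodcol_append)

locale capIK = capelli +
  fixes I K :: "nat list"
  assumes sortedI: "sorted_wrt (<) I" and subI: "set I \<subseteq> {..<n}"
    and lenK: "length K = length I" and subK: "set K \<subseteq> {..<s}"
begin

definition Ccol :: "nat \<Rightarrow> nat \<Rightarrow> 'a" where
  "Ccol b = (\<lambda>x. matmul m M N x (K ! b) + of_nat (length I - Suc b) * H x (K ! b))"

definition Mc :: "nat \<Rightarrow> nat \<Rightarrow> 'a" where "Mc j = (\<lambda>x. M x j)"
definition hc :: "nat \<Rightarrow> nat \<Rightarrow> 'a" where "hc b = (\<lambda>x. H x (K ! b))"

lemma good_Mc: "j < m \<Longrightarrow> j' < m \<Longrightarrow> good c q n (Mc j) (Mc j')"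
  unfolding Mc_def by (rule good_MM)

lemma good_Mc_hc: "j < m \<Longrightarrow> b < length I \<Longrightarrow> good c q n (Mc j) (hc b)"
proof -
  assume "j < m" "b < length I"
  moreover have "K ! b < s" using subK lenK \<open>b < length I\<close> by (metis lessThan_iff nth_mem subsetD)
  ultimately show ?thesis unfolding Mc_def hc_def by (intro good_Mh)
qed

lemma good_hc_Mc: "j < m \<Longrightarrow> b < length I \<Longrightarrow> good c q n (hc b) (Mc j)"
  using good_Mc_hc good_sym by blast

lemma step:
  assumes p: "p < length I" and lJ: "length J = length I - Suc p" and sJ: "set J \<subseteq> {..<m}"
    and lpre: "length pre = p"
  shows "DD c q I (pre @ [Ccol p] @ map Mc J)
       = (\<Sum>j<m. DD c q I (pre @ [Mc j] @ map Mc J) * N j (K ! p))"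
proof -
  let ?Ms = "map Mc J"
  let ?Kp = "K ! p"
  let ?d = "length J"
  have Kp: "?Kp < s" using subK lenK p by (metis lessThan_iff nth_mem subsetD)
  have len: "length (pre @ [u] @ ?Ms) = length I" for u using lJ lpre p by simp
  define D0 where "D0 = DD c q I (pre @ [hc p] @ ?Ms)"
  have C: "Ccol p = (\<lambda>x. (\<Sum>j<m. M x j * N j ?Kp) + of_nat ?d * H x ?Kp)"
    unfolding Ccol_def matmul_def lJ ..
  have "DD c q I (pre @ [Ccol p] @ ?Ms)
      = DD c q I (pre @ [\<lambda>x. \<Sum>j<m. M x j * N j ?Kp] @ ?Ms) + DD c q I (pre @ [\<lambda>x. of_nat ?d * H x ?Kp] @ ?Ms)"
    unfolding C by (rule DD_add)
  also have "DD c q I (pre @ [\<lambda>x. of_nat ?d * H x ?Kp] @ ?Ms) = of_nat ?d * D0"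
    unfolding D0_def hc_def by (rule DD_scal) (simp add: mult_of_nat_commute)
  also have "DD c q I (pre @ [\<lambda>x. \<Sum>j<m. M x j * N j ?Kp] @ ?Ms) = (\<Sum>j<m. DD c q I (pre @ [\<lambda>x. M x j * N j ?Kp] @ ?Ms))"
    by (rule DD_sum)
  also have "\<dots> = (\<Sum>j<m. DD c q I (pre @ [Mc j] @ ?Ms) * N j ?Kp
        + (\<Sum>t<?d. if J ! t = j then DD c q I (pre @ [Mc j] @ ?Ms[t := hc p]) else 0))"
  proof (rule sum.cong[OF refl])
    fix j assume j: "j \<in> {..<m}"
    define dd where "dd t = (\<lambda>x. if J ! t = j then H x ?Kp else 0)" for t
    have "DD c q I (pre @ [\<lambda>x. Mc j x * N j ?Kp] @ ?Ms) = DD c q I (pre @ [Mc j] @ ?Ms) * N j ?Kp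
           + (\<Sum>t<length ?Ms. DD c q I (pre @ [Mc j] @ ?Ms[t := dd t]))"
    proof (rule DD_CT[OF len])
      fix t x assume t: "t < length ?Ms" and x: "x \<in> set I"
      have xn: "x < n" using x subI by auto
      have Jt: "J ! t < m" using t sJ by (metis length_map lessThan_iff nth_mem subsetD)
      have "M x (J ! t) * N j ?Kp - N j ?Kp * M x (J ! t) = - (if J ! t = j then H x ?Kp else 0)"
        using comm[OF xn Jt _ Kp] j by simp
      then show "N j ?Kp * (?Ms ! t) x = (?Ms ! t) x * N j ?Kp + dd t x"
        using t unfolding dd_def Mc_def by (simp add: algebra_simps eq_neg_iff_add_eq_0 split: if_splits)
    qed
    also have "(\<Sum>t<length ?Ms. DD c q I (pre @ [Mc j] @ ?Ms[t := dd t]))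
       = (\<Sum>t<?d. if J ! t = j then DD c q I (pre @ [Mc j] @ ?Ms[t := hc p]) else 0)"
    proof (rule sum.cong)
      fix t assume "t \<in> {..<?d}"
      show "DD c q I (pre @ [Mc j] @ ?Ms[t := dd t]) = (if J ! t = j then DD c q I (pre @ [Mc j] @ ?Ms[t := hc p]) else 0)"
      proof (cases "J ! t = j")
        case True
        then have "dd t = hc p" unfolding dd_def hc_def by auto
        then show ?thesis using True by simp
      next
        case False
        then have "dd t = (\<lambda>x. 0)" unfolding dd_def by auto
        then have "DD c q I (pre @ [Mc j] @ ?Ms[t := dd t]) = DD c q I ((pre @ [Mc j] @ take t ?Ms) @ [\<lambda>x. 0] @ drop (Suc t) ?Ms)"
          using \<open>t \<in> {..<?d}\<close> by (simp add: upd_conv_take_nth_drop)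
        then show ?thesis using False DD_zero[of q I "pre @ Mc j # take t ?Ms" "drop (Suc t) ?Ms"] by simp
      qed
    qed simp
    finally show "DD c q I (pre @ [\<lambda>x. M x j * N j ?Kp] @ ?Ms) = DD c q I (pre @ [Mc j] @ ?Ms) * N j ?Kp
        + (\<Sum>t<?d. if J ! t = j then DD c q I (pre @ [Mc j] @ ?Ms[t := hc p]) else 0)"
      unfolding Mc_def by simp
  qed
  also have "(\<Sum>j<m. DD c q I (pre @ [Mc j] @ ?Ms) * N j ?Kp
        + (\<Sum>t<?d. if J ! t = j then DD c q I (pre @ [Mc j] @ ?Ms[t := hc p]) else 0))
      = (\<Sum>j<m. DD c q I (pre @ [Mc j] @ ?Ms) * N j ?Kp)
        + (\<Sum>t<?d. DD c q I (pre @ [Mc (J ! t)] @ ?Ms[t := hc p]))"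
  proof -
    have "(\<Sum>j<m. \<Sum>t<?d. if J ! t = j then DD c q I (pre @ [Mc j] @ ?Ms[t := hc p]) else 0)
        = (\<Sum>t<?d. \<Sum>j<m. if J ! t = j then DD c q I (pre @ [Mc j] @ ?Ms[t := hc p]) else 0)"
      by (rule sum.swap)
    also have "\<dots> = (\<Sum>t<?d. DD c q I (pre @ [Mc (J ! t)] @ ?Ms[t := hc p]))"
    proof (rule sum.cong[OF refl])
      fix t assume "t \<in> {..<?d}"
      then have "J ! t < m" using sJ by (metis lessThan_iff nth_mem subsetD)
      then show "(\<Sum>j<m. if J ! t = j then DD c q I (pre @ [Mc j] @ ?Ms[t := hc p]) else 0)
          = DD c q I (pre @ [Mc (J ! t)] @ ?Ms[t := hc p])"
        by (simp add: sum.delta)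
    qed
    finally show ?thesis by (simp add: sum.distrib)
  qed
  also have "(\<Sum>t<?d. DD c q I (pre @ [Mc (J ! t)] @ ?Ms[t := hc p])) = (\<Sum>t<?d. - D0)"
  proof (rule sum.cong[OF refl])
    fix t assume t: "t \<in> {..<?d}"
    then have tl: "t < length J" by simp
    have Jt: "J ! t < m" using t sJ by (metis lessThan_iff nth_mem subsetD)
    have e1: "?Ms[t := hc p] = map Mc (take t J) @ [hc p] @ map Mc (drop (Suc t) J)"
      using tl by (simp add: upd_conv_take_nth_drop take_map drop_map)
    have e2: "?Ms = map Mc (take t J) @ [Mc (J ! t)] @ map Mc (drop (Suc t) J)"
      using tl by (simp add: id_take_nth_drop[OF tl, symmetric] take_map drop_map
          flip: map_append) (metis append_Cons append_self_conv2 id_take_nth_drop list.simps(9) map_append)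
    have gz: "\<forall>z\<in>set (map Mc (take t J)). good c q n (Mc (J ! t)) z \<and> good c q n z (hc p)"
    proof
      fix z assume "z \<in> set (map Mc (take t J))"
      then obtain j where "j \<in> set J" "z = Mc j" by (auto dest: in_set_takeD)
      then have "j < m" "z = Mc j" using sJ by auto
      then show "good c q n (Mc (J ! t)) z \<and> good c q n z (hc p)"
        using good_Mc[OF Jt] good_Mc_hc p by auto
    qed
    have "DD c q I (pre @ [Mc (J ! t)] @ map Mc (take t J) @ [hc p] @ map Mc (drop (Suc t) J))
        = - DD c q I (pre @ [hc p] @ map Mc (take t J) @ [Mc (J ! t)] @ map Mc (drop (Suc t) J))"
      by (rule GSW[OF _ sortedI subI good_Mc_hc[OF Jt p] gz]) (use tl lJ lpre p in simp)
    then show "DD c q I (pre @ [Mc (J ! t)] @ ?Ms[t := hc p]) = - D0"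
      unfolding D0_def e1 by (simp only: e2[symmetric])
  qed
  also have "(\<Sum>t<?d. - D0) = - (of_nat ?d * D0)" by simp
  finally show ?thesis by simp
qed


definition nprod :: "nat list \<Rightarrow> nat \<Rightarrow> 'a" where
  "nprod J p = prod_list (map (\<lambda>i. N (J ! i) (K ! (p + i))) [0..<length J])"

lemma nprod_Nil: "nprod [] p = 1" by (simp add: nprod_def)

lemma nprod_Cons: "nprod (j # J) p = N j (K ! p) * nprod J (Suc p)"
proof -
  have "[0..<length (j # J)] = 0 # map Suc [0..<length J]"
    by (simp add: upt_conv_Cons map_Suc_upt del: upt_Suc)
  then show ?thesis unfolding nprod_def by (simp add: o_def)
qed

definition Lists :: "nat \<Rightarrow> nat list set" where
  "Lists l = {J. length J = l \<and> set J \<subseteq> {..<m}}"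

lemma finite_Lists: "finite (Lists l)"
  unfolding Lists_def using finite_lists_length_eq[of "{..<m}" l] by (simp add: conj_commute)

lemma Lists_0: "Lists 0 = {[]}" unfolding Lists_def by auto

lemma Lists_Suc: "Lists (Suc l) = (\<lambda>(j, J). j # J) ` ({..<m} \<times> Lists l)"
  unfolding Lists_def by (auto simp: length_Suc_conv image_iff)

lemma claim:
  assumes "d \<le> length I" "length pre = length I - d"
  shows "DD c q I (pre @ map Ccol [length I - d..<length I])
       = (\<Sum>J\<in>Lists d. DD c q I (pre @ map Mc J) * nprod J (length I - d))"
  using assms
proof (induction d arbitrary: pre)
  case 0 then show ?case by (simp add: Lists_0 nprod_Nil)
next
  case (Suc d)
  let ?r = "length I"
  define p where "p = ?r - Suc d"
  have p: "p < ?r" "Suc p = ?r - d" using Suc.prems unfolding p_def by auto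
  have upt: "[p..<?r] = p # [?r - d..<?r]" using p by (simp add: upt_conv_Cons)
  have "DD c q I (pre @ map Ccol [?r - Suc d..<?r]) = DD c q I ((pre @ [Ccol p]) @ map Ccol [?r - d..<?r])"
    unfolding p_def[symmetric] upt by simp
  also have "\<dots> = (\<Sum>J\<in>Lists d. DD c q I ((pre @ [Ccol p]) @ map Mc J) * nprod J (?r - d))"
    by (rule Suc.IH) (use Suc.prems p p_def in auto)
  also have "\<dots> = (\<Sum>J\<in>Lists d. \<Sum>j<m. DD c q I (pre @ map Mc (j # J)) * nprod (j # J) p)"
  proof (rule sum.cong[OF refl])
    fix J assume J: "J \<in> Lists d"
    have "DD c q I ((pre @ [Ccol p]) @ map Mc J) = (\<Sum>j<m. DD c q I (pre @ [Mc j] @ map Mc J) * N j (K ! p))"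
      using step[OF p(1), of J pre] J Suc.prems p unfolding Lists_def p_def by auto
    then show "DD c q I ((pre @ [Ccol p]) @ map Mc J) * nprod J (?r - d)
        = (\<Sum>j<m. DD c q I (pre @ map Mc (j # J)) * nprod (j # J) p)"
      by (simp add: sum_distrib_right nprod_Cons p(2)[symmetric] mult.assoc)
  qed
  also have "\<dots> = (\<Sum>j<m. \<Sum>J\<in>Lists d. DD c q I (pre @ map Mc (j # J)) * nprod (j # J) p)"
    by (rule sum.swap)
  also have "\<dots> = (\<Sum>(j, J)\<in>{..<m} \<times> Lists d. DD c q I (pre @ map Mc (j # J)) * nprod (j # J) p)"
    by (rule sum.cartesian_product)
  also have "\<dots> = (\<Sum>J'\<in>Lists (Suc d). DD c q I (pre @ map Mc J') * nprod J' p)"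
    unfolding Lists_Suc
    by (subst sum.reindex) (auto simp: inj_on_def case_prod_beta)
  finally show ?case unfolding p_def .
qed

lemma lhs_DD:
  "(\<Sum>\<sigma> | \<sigma> permutes {0..<length I}.
      c (qeps q I \<sigma>) * prod_list (map (\<lambda>b.
          matmul m M N (I ! \<sigma> b) (K ! b) + of_nat (length I - Suc b) * H (I ! \<sigma> b) (K ! b))
        [0..<length I]))
   = DD c q I (map Ccol [0..<length I])"
  unfolding DD_def prodcol_conv0 Ccol_def
  by (intro sum.cong refl arg_cong2[where f="(*)"] arg_cong[where f=prod_list] map_cong) simp_all


definition Incr :: "nat list set" where
  "Incr = {S. length S = length I \<and> sorted_wrt (<) S \<and> set S \<subseteq> {..<m}}"

definition Perms :: "(nat \<Rightarrow> nat) set" where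
  "Perms = {\<tau>. \<tau> permutes {..<length I}}"

lemma finite_Incr: "finite Incr"
  by (rule finite_subset[OF _ finite_Lists[of "length I"]]) (auto simp: Incr_def Lists_def)

lemma finite_Perms: "finite Perms"
  unfolding Perms_def by (rule finite_permutations) simp

lemma nodist_zero:
  assumes J: "J \<in> Lists (length I)" and nd: "\<not> distinct J"
  shows "DD c q I (map Mc J) = 0"
proof -
  obtain xs ys zs y where Jd: "J = xs @ [y] @ ys @ [y] @ zs" using not_distinct_decomp[OF nd] by blast
  have y: "y < m" and ys: "\<forall>z\<in>set ys. z < m" using J unfolding Jd Lists_def by auto
  have "DD c q I (map Mc xs @ [Mc y] @ map Mc ys @ [Mc y] @ map Mc zs) = 0"
  proof (rule DUP[OF _ sortedI subI good_Mc[OF y y]])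
    show "length (map Mc xs @ [Mc y] @ map Mc ys @ [Mc y] @ map Mc zs) = length I"
      using J unfolding Jd Lists_def by simp
    show "\<forall>z\<in>set (map Mc ys). good c q n (Mc y) z \<and> good c q n z (Mc y)"
      using ys good_Mc y by auto
  qed
  then show ?thesis unfolding Jd by simp
qed

lemma qeps1_len: "length A = length B \<Longrightarrow> qeps (\<lambda>_ _. 1) A \<tau> = qeps (\<lambda>_ _. 1) B \<tau>"
  unfolding qeps_def by simp

lemma perm_term:
  assumes S: "S \<in> Incr" and \<tau>: "\<tau> \<in> Perms"
  shows "DD c q I (map Mc (permute_list \<tau> S)) * nprod (permute_list \<tau> S) 0
       = DD c q I (map Mc S) * (c (qeps (\<lambda>_ _. 1) S \<tau>) * nprod (permute_list \<tau> S) 0)"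
proof -
  have lS: "length S = length I" using S by (simp add: Incr_def)
  have p: "\<tau> permutes {0..<length I}" using \<tau> by (simp add: Perms_def lessThan_atLeast0)
  have sS: "set S \<subseteq> {..<m}" using S by (simp add: Incr_def)
  have m1: "map Mc (permute_list \<tau> S) = map (\<lambda>k. map Mc S ! \<tau> k) [0..<length I]"
    unfolding permute_list_def lS map_map
    by (rule map_cong[OF refl]) (use permutes_in_image[OF p] lS in auto)
  have gd: "\<forall>x\<in>set (map Mc S). \<forall>y\<in>set (map Mc S). good c q n x y"
    using sS good_Mc by auto
  have "DD c q I (map Mc (permute_list \<tau> S)) = c (qeps (\<lambda>_ _. 1) I \<tau>) * DD c q I (map Mc S)"
    unfolding m1 by (rule DD_perm[OF _ sortedI subI gd p]) (simp add: lS)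
  also have "qeps (\<lambda>_ _. 1) I \<tau> = qeps (\<lambda>_ _. 1) S \<tau>" using qeps1_len lS by metis
  finally have E: "DD c q I (map Mc (permute_list \<tau> S)) = c (qeps (\<lambda>_ _. 1) S \<tau>) * DD c q I (map Mc S)" .
  have ce: "c (qeps (\<lambda>_ _. 1) S \<tau>) * DD c q I (map Mc S) = DD c q I (map Mc S) * c (qeps (\<lambda>_ _. 1) S \<tau>)"
    by (rule central)
  show ?thesis by (simp only: E ce mult.assoc[symmetric])
qed

lemma cdet_eq:
  assumes S: "S \<in> Incr"
  shows "cdet c S K N = (\<Sum>\<tau>\<in>Perms. c (qeps (\<lambda>_ _. 1) S \<tau>) * nprod (permute_list \<tau> S) 0)"
proof -
  have lS: "length S = length I" using S by (simp add: Incr_def)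
  have "nprod (permute_list \<tau> S) 0 = prod_list (map (\<lambda>k. N (S ! \<tau> k) (K ! k)) [0..<length S])"
    if p: "\<tau> permutes {..<length S}" for \<tau>
    unfolding nprod_def
    by (intro arg_cong[where f=prod_list] map_cong) (auto simp: permute_list_nth[OF p])
  then show ?thesis
    unfolding cdet_def cdetq_def Perms_def lS[symmetric] lessThan_atLeast0
    by (intro sum.cong refl) (simp add: lessThan_atLeast0)
qed

lemma phi_inj: "inj_on (\<lambda>(S, \<tau>). permute_list \<tau> S) (Incr \<times> Perms)"
proof (rule inj_onI, clarsimp)
  fix S \<tau> S' \<tau>'
  assume S: "S \<in> Incr" and t: "\<tau> \<in> Perms" and S': "S' \<in> Incr" and t': "\<tau>' \<in> Perms"
    and eq: "permute_list \<tau> S = permute_list \<tau>' S'"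
  have lS: "length S = length I" "length S' = length I" using S S' by (auto simp: Incr_def)
  have p: "\<tau> permutes {..<length S}" "\<tau>' permutes {..<length S'}" using t t' lS by (auto simp: Perms_def)
  have "set S = set S'" using eq set_permute_list[OF p(1)] set_permute_list[OF p(2)] by simp
  moreover have "sorted S" "distinct S" "sorted S'" "distinct S'"
    using S S' by (auto simp: Incr_def strict_sorted_iff)
  ultimately have SS: "S = S'" using sorted_distinct_set_unique by blast
  have "\<tau> k = \<tau>' k" for k
  proof (cases "k < length S")
    case True
    have "S ! \<tau> k = S ! \<tau>' k"
      using eq permute_list_nth[OF p(1) True] permute_list_nth[OF p(2)] True SS by metis
    moreover have "\<tau> k < length S" "\<tau>' k < length S"
      using permutes_in_image[OF p(1)] permutes_in_image[OF p(2)] True SS by auto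
    ultimately show ?thesis using nth_eq_iff_index_eq \<open>distinct S\<close> by blast
  next
    case False
    then show ?thesis using permutes_not_in[OF p(1)] permutes_not_in[OF p(2)] SS by simp
  qed
  then show "S = S' \<and> \<tau> = \<tau>'" using SS by auto
qed

lemma phi_image: "(\<lambda>(S, \<tau>). permute_list \<tau> S) ` (Incr \<times> Perms) = {J \<in> Lists (length I). distinct J}"
proof (intro equalityI subsetI)
  fix J assume "J \<in> (\<lambda>(S, \<tau>). permute_list \<tau> S) ` (Incr \<times> Perms)"
  then obtain S \<tau> where S: "S \<in> Incr" and t: "\<tau> \<in> Perms" and J: "J = permute_list \<tau> S" by auto
  have lS: "length S = length I" using S by (simp add: Incr_def)
  have p: "\<tau> permutes {..<length S}" using t lS by (simp add: Perms_def)
  have "distinct S" using S by (simp add: Incr_def strict_sorted_iff)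
  then have "distinct J" unfolding J using mset_eq_imp_distinct_iff[OF mset_permute_list[OF p]] by simp
  moreover have "set J \<subseteq> {..<m}" "length J = length I"
    using S set_permute_list[OF p] lS unfolding J Incr_def by auto
  ultimately show "J \<in> {J \<in> Lists (length I). distinct J}" by (simp add: Lists_def)
next
  fix J assume "J \<in> {J \<in> Lists (length I). distinct J}"
  then have J: "length J = length I" "set J \<subseteq> {..<m}" "distinct J" by (auto simp: Lists_def)
  have ms: "mset J = mset (sort J)" by simp
  obtain \<tau> where p: "\<tau> permutes {..<length (sort J)}" and pl: "permute_list \<tau> (sort J) = J"
    using mset_eq_permutation[OF ms] by blast
  have "sort J \<in> Incr" using J by (simp add: Incr_def strict_sorted_iff)
  moreover have "\<tau> \<in> Perms" using p J by (simp add: Perms_def)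
  ultimately show "J \<in> (\<lambda>(S, \<tau>). permute_list \<tau> S) ` (Incr \<times> Perms)"
    using pl by force
qed

lemma claim1:
  "(\<Sum>J\<in>Lists (length I). DD c q I (map Mc J) * nprod J 0)
   = (\<Sum>S | length S = length I \<and> sorted_wrt (<) S \<and> set S \<subseteq> {..<m}.
        cdetq c q I S M * cdet c S K N)"
proof -
  let ?F = "\<lambda>J. DD c q I (map Mc J) * nprod J 0"
  have "(\<Sum>J\<in>Lists (length I). ?F J) = (\<Sum>J\<in>Lists (length I). if distinct J then ?F J else 0)"
    by (rule sum.cong[OF refl]) (simp add: nodist_zero)
  also have "\<dots> = (\<Sum>J\<in>{J \<in> Lists (length I). distinct J}. ?F J)"
    by (rule sum.inter_filter[OF finite_Lists, symmetric])
  also have "\<dots> = (\<Sum>x\<in>Incr \<times> Perms. ?F ((\<lambda>(S, \<tau>). permute_list \<tau> S) x))"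
    unfolding phi_image[symmetric] by (rule sum.reindex[OF phi_inj, unfolded comp_def])
  also have "\<dots> = (\<Sum>(S, \<tau>)\<in>Incr \<times> Perms. ?F (permute_list \<tau> S))"
    by (rule sum.cong) auto
  also have "\<dots> = (\<Sum>S\<in>Incr. \<Sum>\<tau>\<in>Perms. ?F (permute_list \<tau> S))"
    by (rule sum.cartesian_product[symmetric])
  also have "\<dots> = (\<Sum>S\<in>Incr. DD c q I (map Mc S) * cdet c S K N)"
  proof (rule sum.cong[OF refl])
    fix S assume S: "S \<in> Incr"
    show "(\<Sum>\<tau>\<in>Perms. ?F (permute_list \<tau> S)) = DD c q I (map Mc S) * cdet c S K N"
      unfolding cdet_eq[OF S] sum_distrib_left by (rule sum.cong[OF refl]) (rule perm_term[OF S])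
  qed
  also have "\<dots> = (\<Sum>S\<in>Incr. cdetq c q I S M * cdet c S K N)"
  proof (rule sum.cong[OF refl])
    fix S assume S: "S \<in> Incr"
    then have lS: "length S = length I" by (simp add: Incr_def)
    have mm: "map (\<lambda>j x. M x j) S = map Mc S" by (simp add: Mc_def)
    have "cdetq c q I S M = DD c q I (map Mc S)" using cdetq_DD[OF lS, of c q M] unfolding mm .
    then show "DD c q I (map Mc S) * cdet c S K N = cdetq c q I S M * cdet c S K N" by simp
  qed
  finally show ?thesis by (simp only: Incr_def)
qed

lemma main_IK:
  "(\<Sum>\<sigma> | \<sigma> permutes {0..<length I}.
      c (qeps q I \<sigma>) * prod_list (map (\<lambda>b.
          matmul m M N (I ! \<sigma> b) (K ! b) + of_nat (length I - Suc b) * H (I ! \<sigma> b) (K ! b))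
        [0..<length I]))
   = (\<Sum>S | length S = length I \<and> sorted_wrt (<) S \<and> set S \<subseteq> {..<m}.
        cdetq c q I S M * cdet c S K N)"
proof -
  have "DD c q I (map Ccol [0..<length I]) = (\<Sum>J\<in>Lists (length I). DD c q I (map Mc J) * nprod J 0)"
    using claim[of "length I" "[]"] by simp
  then show ?thesis by (simp only: lhs_DD claim1[symmetric])
qed

end


theorem mainTheorem11:
  fixes c :: "complex \<Rightarrow> 'a::ring_1"
    and n m s :: nat
    and q :: "nat \<Rightarrow> nat \<Rightarrow> complex"
    and M N H :: "nat \<Rightarrow> nat \<Rightarrow> 'a"
  assumes alg: "calg_emb c"
    and par: "parametric_mat n q"
    and manin: "q1_manin c n m q M"
    and comm: "\<And>i j k l. i < n \<Longrightarrow> j < m \<Longrightarrow> k < m \<Longrightarrow> l < s \<Longrightarrow>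
                 M i j * N k l - N k l * M i j = - (if j = k then H i l else 0)"
  shows "(\<forall>r I K. r \<le> m \<and> length I = r \<and> sorted_wrt (<) I \<and> set I \<subseteq> {..<n}
            \<and> length K = r \<and> set K \<subseteq> {..<s} \<longrightarrow>
           (\<Sum>\<sigma> | \<sigma> permutes {0..<r}.
              c (qeps q I \<sigma>) * prod_list (map (\<lambda>b.
                  matmul m M N (I ! \<sigma> b) (K ! b) + of_nat (r - Suc b) * H (I ! \<sigma> b) (K ! b))
                [0..<r]))
           = (\<Sum>J | length J = r \<and> sorted_wrt (<) J \<and> set J \<subseteq> {..<m}.
                cdetq c q I J M * cdet c J K N))
       \<and> (m = n \<and> s = n \<longrightarrow>
           cdetq c q [0..<n] [0..<n] (\<lambda>i l. matmul m M N i l + of_nat (n - Suc l) * H i l)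
           = cdetq c q [0..<n] [0..<n] M * cdet c [0..<n] [0..<n] N)"
  proof -
  have part1: "\<forall>r I K. r \<le> m \<and> length I = r \<and> sorted_wrt (<) I \<and> set I \<subseteq> {..<n}
            \<and> length K = r \<and> set K \<subseteq> {..<s} \<longrightarrow>
           (\<Sum>\<sigma> | \<sigma> permutes {0..<r}.
              c (qeps q I \<sigma>) * prod_list (map (\<lambda>b.
                  matmul m M N (I ! \<sigma> b) (K ! b) + of_nat (r - Suc b) * H (I ! \<sigma> b) (K ! b))
                [0..<r]))
           = (\<Sum>J | length J = r \<and> sorted_wrt (<) J \<and> set J \<subseteq> {..<m}.
                cdetq c q I J M * cdet c J K N)"
  proof (intro allI impI)
    fix r I K
    assume h: "r \<le> m \<and> length I = r \<and> sorted_wrt (<) I \<and> set I \<subseteq> {..<n}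
            \<and> length K = r \<and> set K \<subseteq> {..<s}"
    interpret capIK c q n m s M N H I K
      by unfold_locales (use alg manin comm h in auto)
    show "(\<Sum>\<sigma> | \<sigma> permutes {0..<r}.
              c (qeps q I \<sigma>) * prod_list (map (\<lambda>b.
                  matmul m M N (I ! \<sigma> b) (K ! b) + of_nat (r - Suc b) * H (I ! \<sigma> b) (K ! b))
                [0..<r]))
           = (\<Sum>J | length J = r \<and> sorted_wrt (<) J \<and> set J \<subseteq> {..<m}.
                cdetq c q I J M * cdet c J K N)"
      using main_IK h by simp
  qed
  have part2: "m = n \<and> s = n \<longrightarrow>
           cdetq c q [0..<n] [0..<n] (\<lambda>i l. matmul m M N i l + of_nat (n - Suc l) * H i l)
           = cdetq c q [0..<n] [0..<n] M * cdet c [0..<n] [0..<n] N"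
  proof
    assume mn: "m = n \<and> s = n"
    have P: "(\<Sum>\<sigma> | \<sigma> permutes {0..<n}.
              c (qeps q [0..<n] \<sigma>) * prod_list (map (\<lambda>b.
                  matmul m M N ([0..<n] ! \<sigma> b) ([0..<n] ! b) + of_nat (n - Suc b) * H ([0..<n] ! \<sigma> b) ([0..<n] ! b))
                [0..<n]))
           = (\<Sum>J | length J = n \<and> sorted_wrt (<) J \<and> set J \<subseteq> {..<m}.
                cdetq c q [0..<n] J M * cdet c J [0..<n] N)"
      using part1[rule_format, of n "[0..<n]" "[0..<n]"] mn by (simp add: sorted_wrt_upt atLeast0LessThan)
    have S: "{J. length J = n \<and> sorted_wrt (<) J \<and> set J \<subseteq> {..<m}} = {[0..<n]}"
    proof (intro equalityI subsetI)
      fix J assume A: "J \<in> {J. length J = n \<and> sorted_wrt (<) J \<and> set J \<subseteq> {..<m}}"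
      have J1: "length J = n" "sorted_wrt (<) J" "set J \<subseteq> {..<n}" using A mn by auto
      have J2: "sorted J" "distinct J" using J1(2) strict_sorted_iff by auto
      have cJ: "card (set J) = card {..<n}" using distinct_card[OF J2(2)] J1(1) by simp
      have "set J = {..<n}" by (rule card_subset_eq[OF finite_lessThan J1(3) cJ])
      then have "set J = set [0..<n]" by (simp add: atLeast0LessThan)
      then have "J = [0..<n]" using sorted_distinct_set_unique[OF J2 sorted_upt distinct_upt] by blast
      then show "J \<in> {[0..<n]}" by simp
    next
      fix J assume "J \<in> {[0..<n]}"
      then have "J = [0..<n]" by simp
      moreover have "sorted_wrt (<) [0..<n]" by (simp add: strict_sorted_iff)
      moreover have "set [0..<n] \<subseteq> {..<m}" using mn by auto
      ultimately show "J \<in> {J. length J = n \<and> sorted_wrt (<) J \<and> set J \<subseteq> {..<m}}" by simp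
    qed
    have L: "cdetq c q [0..<n] [0..<n] (\<lambda>i l. matmul m M N i l + of_nat (n - Suc l) * H i l)
       = (\<Sum>\<sigma> | \<sigma> permutes {0..<n}.
              c (qeps q [0..<n] \<sigma>) * prod_list (map (\<lambda>b.
                  matmul m M N ([0..<n] ! \<sigma> b) ([0..<n] ! b) + of_nat (n - Suc b) * H ([0..<n] ! \<sigma> b) ([0..<n] ! b))
                [0..<n]))"
      unfolding cdetq_def length_upt diff_zero
    proof (rule sum.cong[OF refl])
      fix \<sigma> :: "nat \<Rightarrow> nat"
      have "map (\<lambda>k. matmul m M N ([0..<n] ! \<sigma> k) ([0..<n] ! k) + of_nat (n - Suc ([0..<n] ! k)) * H ([0..<n] ! \<sigma> k) ([0..<n] ! k)) [0..<n]
          = map (\<lambda>b. matmul m M N ([0..<n] ! \<sigma> b) ([0..<n] ! b) + of_nat (n - Suc b) * H ([0..<n] ! \<sigma> b) ([0..<n] ! b)) [0..<n]"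
        by (rule map_cong[OF refl]) simp
      then show "c (qeps q [0..<n] \<sigma>) * prod_list (map (\<lambda>k. matmul m M N ([0..<n] ! \<sigma> k) ([0..<n] ! k) + of_nat (n - Suc ([0..<n] ! k)) * H ([0..<n] ! \<sigma> k) ([0..<n] ! k)) [0..<n])
          = c (qeps q [0..<n] \<sigma>) * prod_list (map (\<lambda>b. matmul m M N ([0..<n] ! \<sigma> b) ([0..<n] ! b) + of_nat (n - Suc b) * H ([0..<n] ! \<sigma> b) ([0..<n] ! b)) [0..<n])"
        by (rule arg_cong[where f="\<lambda>x. c (qeps q [0..<n] \<sigma>) * prod_list x"])
    qed
    show "cdetq c q [0..<n] [0..<n] (\<lambda>i l. matmul m M N i l + of_nat (n - Suc l) * H i l)
           = cdetq c q [0..<n] [0..<n] M * cdet c [0..<n] [0..<n] N"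
      unfolding L P S by simp
  qed
  show ?thesis using part1 part2 by blast
qed

end
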